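(* If $K$ is a degenerate CMI, i.e. $K=(\cdot,\langle\ \rangle)$, then $(\cdot,\langle\ \rangle)$ is the only sub-CMI of $K$.
   Context: Setting: $X_1,\dots,X_n$ jointly distributed discrete random variables with $H(X_i)<\infty$; distribution unspecified. $X_\alpha=(X_i,i\in\alpha)$, $X_\emptyset$ constant. A CMI is $K=(C,\langle Q_1,\dots,Q_k\rangle)$, $k\ge0$, $C\subseteq\{1,\dots,n\}$, $\langle\cdot\rangle$ an unordered multiset of subsets; valid (for a given distribution) if $\sum_iH(X_{Q_i}|X_C)-H(X_{Q_1},\dots,X_{Q_k}|X_C)=0$. Empty members may be deleted. Degenerate = valid for every distribution; all degenerate CMIs are identified and written $(\cdot,\langle\ \rangle)$. $\mathrm{pur}(K)=(C,\langle Q_i\setminus C:Q_i\setminus C\ne\emptyset\rangle)$. For pure $K$: $\mathbb I_K$ = indices lying in at least two members of the collection if $k\ge2$, else $\emptyset$; $P_1,\dots,P_t$ the nonempty sets among $Q_i\setminus\mathbb I_K$; $\mathrm{can}(K)=(\cdot,\langle\ \rangle)$ if $k\le1$, $(C,\langle\mathbb I_K,\mathbb I_K\rangle)$ if $k\ge2,\mathbb I_K\ne\emptyset,t\le1$, $(C,\langle P_1..P_t\rangle)$ if $k\ge2,\mathbb I_K=\emptyset$, $(C,\langle\mathbb I_K,\mathbb I_K,P_1..P_t\rangle)$ if $k\ge2,\mathbb I_K\ne\emptyset,t\ge2$. For general $K$, $\mathbb I_K$ is the repeated-index set of $\mathrm{pur}(K)$ and $\mathrm{can}(\mathrm{pur}(K))$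 is written $(C,\langle\mathbb I_K,\mathbb I_K,P_i,1\le i\le t\rangle)$ (copies of $\mathbb I_K$ omitted if empty; for degenerate $K$ this means $\mathbb I_K=\emptyset$, $t\in\{0,1\}$, $C$ arbitrary). $P=\bigcup_iP_i$, $S=C\cup P$. $R_K^{K'}$: with $\mathrm{can}(\mathrm{pur}(K'))=(C',\langle\mathbb I_{K'},\mathbb I_{K'},P'_j,1\le j\le s\rangle)$, $D=\mathbb I_{K'}\setminus\mathbb I_K$ and $T_1,\dots,T_u$ the nonempty sets among $P'_j\setminus\mathbb I_K$: $R_K^{K'}=(\cdot,\langle\ \rangle)$ if $D=\emptyset,u\le1$; $(C'\setminus\mathbb I_K,\langle T_1..T_u\rangle)$ if $D=\emptyset,u\ge2$; $(C'\setminus\mathbb I_K,\langle D,D\rangle)$ if $D\ne\emptyset,u\le1$; $(C'\setminus\mathbb I_K,\langle D,D,T_1..T_u\rangle)$ if $D\ne\emptyset,u\ge2$. Sub-CMI: with $K''=R_K^{K'}$, $\mathrm{can}(\mathrm{pur}(K''))=(C'',\langle\mathbb I_{K''},\mathbb I_{K''},P''_j,1\le j\le r\rangle)$, $P''=\bigcup_jP''_j$, $K'$ is a sub-CMI of $K$ if: (i) $K'=(\cdot,\langle\ \rangle)$; or (ii) $\mathrm{can}(\mathrm{pur}(K''))=(\cdot,\langle\ \rangle)$ and $C\subseteq C'$; or (iii) $\mathrm{can}(\mathrm{pur}(K''))\ne(\cdot,\langle\ \rangle)$, $\mathbb I_{K''}=\emptyset$, $P''\subseteq P$, $C\subseteq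 C''\subseteq S\setminus P''$, and whenever $m_1\in P''_{j_1}$, $m_2\in P''_{j_2}$ with $j_1\ne j_2$, then $m_1\in P_{i_1}$, $m_2\in P_{i_2}$ with $i_1\ne i_2$. *)

theory Defs
  imports "HOL-Analysis.Analysis" "HOL-Library.Multiset"
          "HOL-Probability.Probability_Mass_Function"
begin

text \<open>A joint distribution of X_1,...,X_n is a pmf on outcomes nat => nat
  (omega i is the value of X_i; countable value sets are coded into nat).\<close>

type_synonym outcome = "nat \<Rightarrow> nat"

definition proj :: "nat set \<Rightarrow> outcome \<Rightarrow> outcome" where
  "proj A \<omega> = (\<lambda>i. if i \<in> A then \<omega> i else 0)"

definition ent_term :: "outcome pmf \<Rightarrow> nat set \<Rightarrow> outcome \<Rightarrow> real" where
  "ent_term p A x = - pmf (map_pmf (proj A) p) x * log 2 (pmf (map_pmf (proj A) p) x)"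

definition H :: "outcome pmf \<Rightarrow> nat set \<Rightarrow> real" where
  "H p A = infsum (ent_term p A) UNIV"

definition finite_entropy :: "outcome pmf \<Rightarrow> nat \<Rightarrow> bool" where
  "finite_entropy p i \<longleftrightarrow> ent_term p {i} summable_on UNIV"

definition Hc :: "outcome pmf \<Rightarrow> nat set \<Rightarrow> nat set \<Rightarrow> real" where
  "Hc p A C = H p (A \<union> C) - H p C"

text \<open>A CMI (C, <Q_1,...,Q_k>): conditioning set and a multiset of subsets.\<close>
type_synonym cmi = "nat set \<times> nat set multiset"

definition is_cmi :: "nat \<Rightarrow> cmi \<Rightarrow> bool" where
  "is_cmi n K \<longleftrightarrow> fst K \<subseteq> {1..n} \<and> (\<forall>Q\<in>#snd K. Q \<subseteq> {1..n})"

definition valid :: "outcome pmf \<Rightarrow> cmi \<Rightarrow> bool" where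
  "valid p K \<longleftrightarrow>
     sum_mset (image_mset (\<lambda>Q. Hc p Q (fst K)) (snd K))
       - Hc p (\<Union>(set_mset (snd K))) (fst K) = 0"

text \<open>Degenerate: valid for every distribution with finite H(X_i).
  All degenerate CMIs are identified with the symbol (.,< >).\<close>
definition degenerate :: "nat \<Rightarrow> cmi \<Rightarrow> bool" where
  "degenerate n K \<longleftrightarrow>
     (\<forall>p :: outcome pmf. (\<forall>i\<in>{1..n}. finite_entropy p i) \<longrightarrow> valid p K)"

definition pur :: "cmi \<Rightarrow> cmi" where
  "pur K = (fst K, filter_mset (\<lambda>Q. Q \<noteq> {}) (image_mset (\<lambda>Q. Q - fst K) (snd K)))"

definition rep :: "nat set multiset \<Rightarrow> nat set" where
  "rep Qs = (if size Qs \<ge> 2 then {m. 2 \<le> size (filter_mset (\<lambda>Q. m \<in> Q) Qs)} else {})"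

definition Psets_of :: "nat set \<Rightarrow> nat set multiset \<Rightarrow> nat set multiset" where
  "Psets_of I Qs = filter_mset (\<lambda>P. P \<noteq> {}) (image_mset (\<lambda>Q. Q - I) Qs)"

definition IK :: "cmi \<Rightarrow> nat set" where
  "IK K = rep (snd (pur K))"

definition Psets :: "cmi \<Rightarrow> nat set multiset" where
  "Psets K = Psets_of (IK K) (snd (pur K))"

definition Pun :: "cmi \<Rightarrow> nat set" where
  "Pun K = \<Union>(set_mset (Psets K))"

definition Sset :: "cmi \<Rightarrow> nat set" where
  "Sset K = fst K \<union> Pun K"

text \<open>Canonical form of a (pure) CMI; the symbol (.,< >) is represented by
  the CMI (C, {#}) with empty collection, which is degenerate.\<close>
definition can :: "cmi \<Rightarrow> cmi" where
  "can K = (let C = fst K; Qs = snd K; I = rep Qs; Ps = Psets_of I Qs in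
     if size Qs \<le> 1 then (C, {#})
     else if I = {} then (C, Ps)
     else if size Ps \<le> 1 then (C, {#I, I#})
     else (C, {#I, I#} + Ps))"

definition RK :: "cmi \<Rightarrow> cmi \<Rightarrow> cmi" where
  "RK K K' = (let I = IK K; C' = fst K'; D = IK K' - I;
       Ts = filter_mset (\<lambda>T. T \<noteq> {}) (image_mset (\<lambda>P. P - I) (Psets K')) in
     if D = {} \<and> size Ts \<le> 1 then (C' - I, {#})
     else if D = {} then (C' - I, Ts)
     else if size Ts \<le> 1 then (C' - I, {#D, D#})
     else (C' - I, {#D, D#} + Ts))"

definition sub_cmi :: "nat \<Rightarrow> cmi \<Rightarrow> cmi \<Rightarrow> bool" where
  "sub_cmi n K' K \<longleftrightarrow>
     degenerate n K' \<or>
     (let K'' = RK K K'; Kc = can (pur K''); P'' = Pun K'' in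
       (degenerate n Kc \<and> fst K \<subseteq> fst K') \<or>
       (\<not> degenerate n Kc \<and> IK K'' = {} \<and> P'' \<subseteq> Pun K \<and>
        fst K \<subseteq> fst Kc \<and> fst Kc \<subseteq> Sset K - P'' \<and>
        (\<forall>A\<in>#Psets K''. \<forall>B\<in>#(Psets K'' - {#A#}). \<forall>m1\<in>A. \<forall>m2\<in>B.
           (\<exists>X\<in>#Psets K. \<exists>Y\<in>#(Psets K - {#X#}). m1 \<in> X \<and> m2 \<in> Y))))"

end

theory Submission
  imports Defs
begin

lemma ent_pmf_of_set:
  assumes "finite F" "F \<noteq> {}"
  shows "infsum (\<lambda>x. - pmf (pmf_of_set F) x * log 2 (pmf (pmf_of_set F) x)) UNIV = log 2 (card F)"
proof -
  have "infsum (\<lambda>x. - pmf (pmf_of_set F) x * log 2 (pmf (pmf_of_set F) x)) UNIV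
      = infsum (\<lambda>x. - pmf (pmf_of_set F) x * log 2 (pmf (pmf_of_set F) x)) F"
    by (rule infsum_cong_neutral) (use assms in auto)
  also have "\<dots> = (\<Sum>x\<in>F. log 2 (card F) / card F)"
    using assms by (simp add: log_divide)
  also have "\<dots> = log 2 (card F)" using assms by simp
  finally show ?thesis .
qed

lemma ent_summable:
  assumes "finite (set_pmf q)"
  shows "(\<lambda>x. - pmf q x * log 2 (pmf q x)) summable_on UNIV"
proof -
  have "(\<lambda>x. - pmf q x * log 2 (pmf q x)) summable_on set_pmf q" using assms by simp
  then show ?thesis
    by (rule summable_on_cong_neutral[THEN iffD1, rotated -1]) (auto simp: set_pmf_iff)
qed

definition x1 :: "nat set \<Rightarrow> outcome" where "x1 T = (\<lambda>i. if i \<in> T then 1 else 0)"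
definition pT :: "nat set \<Rightarrow> outcome pmf" where "pT T = pmf_of_set {(\<lambda>i. 0), x1 T}"

lemma H_pT:
  assumes "T \<noteq> {}"
  shows "H (pT T) A = (if A \<inter> T \<noteq> {} then 1 else 0)"
proof -
  have ne: "(\<lambda>i. 0::nat) \<noteq> x1 T" using assms by (auto simp: x1_def fun_eq_iff)
  have p0: "proj A (\<lambda>i. 0) = (\<lambda>i. 0)" by (auto simp: proj_def)
  show ?thesis
  proof (cases "A \<inter> T = {}")
    case True
    have "proj A (x1 T) = (\<lambda>i. 0)" using True by (auto simp: proj_def x1_def fun_eq_iff)
    then have "map_pmf (proj A) (pT T) = map_pmf (\<lambda>_. (\<lambda>i. 0)) (pT T)"
      unfolding pT_def by (intro map_pmf_cong) (auto simp: p0)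
    then have eq: "map_pmf (proj A) (pT T) = pmf_of_set {(\<lambda>i. 0)}" by (simp add: pmf_of_set_singleton)
    have "H (pT T) A = log 2 (card {(\<lambda>i. 0::nat)})"
      unfolding H_def ent_term_def eq using ent_pmf_of_set[of "{(\<lambda>i. 0::nat)}"] by simp
    then show ?thesis using True by simp
  next
    case False
    have ne2: "proj A (x1 T) \<noteq> (\<lambda>i. 0)" using False by (auto simp: proj_def x1_def fun_eq_iff)
    have "inj_on (proj A) {(\<lambda>i. 0), x1 T}" using ne2 p0 by (auto simp: inj_on_def)
    then have eq: "map_pmf (proj A) (pT T) = pmf_of_set (proj A ` {(\<lambda>i. 0), x1 T})"
      unfolding pT_def by (rule map_pmf_of_set_inj) auto
    have "H (pT T) A = log 2 (card (proj A ` {(\<lambda>i. 0), x1 T}))"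
      unfolding H_def ent_term_def eq using ent_pmf_of_set[of "proj A ` {(\<lambda>i. 0), x1 T}"] by simp
    then show ?thesis using False ne2 p0 by simp
  qed
qed

lemma fe_pT: "finite_entropy (pT T) i"
  unfolding finite_entropy_def ent_term_def pT_def
  by (rule ent_summable) simp

lemma sum_ind: "sum_mset (image_mset (\<lambda>x. if P x then (1::real) else 0) M) = real (size (filter_mset P M))"
  by (induction M) auto

lemma size_pur: "size (snd (pur K)) = size (filter_mset (\<lambda>Q. \<not> Q \<subseteq> fst K) (snd K))"
  unfolding pur_def by (simp add: filter_mset_image_mset)

lemma deg_imp: assumes "degenerate n K" shows "size (snd (pur K)) \<le> 1"
proof (rule ccontr)
  assume A: "\<not> size (snd (pur K)) \<le> 1"
  define C where "C = fst K"
  define Qs where "Qs = snd K"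
  define T where "T = \<Union>(set_mset Qs) - C"
  have "size (filter_mset (\<lambda>Q. \<not> Q \<subseteq> C) Qs) \<noteq> 0" using A unfolding size_pur C_def Qs_def by linarith
  then have "filter_mset (\<lambda>Q. \<not> Q \<subseteq> C) Qs \<noteq> {#}" by (metis size_empty)
  then obtain Q0 where "Q0 \<in># filter_mset (\<lambda>Q. \<not> Q \<subseteq> C) Qs" by blast
  then have "Q0 \<in># Qs" "\<not> Q0 \<subseteq> C" by simp_all
  then have Tne: "T \<noteq> {}" unfolding T_def by auto
  have v: "valid (pT T) K" using assms fe_pT unfolding degenerate_def by blast
  have HC: "H (pT T) C = 0" using Tne by (simp add: H_pT T_def)
  have "image_mset (\<lambda>Q. Hc (pT T) Q C) Qs = image_mset (\<lambda>Q. if \<not> Q \<subseteq> C then 1 else 0) Qs"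
  proof (rule image_mset_cong)
    fix Q assume "Q \<in># Qs"
    then have "(Q \<union> C) \<inter> T \<noteq> {} \<longleftrightarrow> \<not> Q \<subseteq> C" unfolding T_def by auto
    then show "Hc (pT T) Q C = (if \<not> Q \<subseteq> C then 1 else 0)"
      unfolding Hc_def using HC Tne by (simp add: H_pT)
  qed
  then have s1: "sum_mset (image_mset (\<lambda>Q. Hc (pT T) Q C) Qs) = real (size (snd (pur K)))"
    by (simp add: sum_ind size_pur C_def Qs_def)
  have "(\<Union>(set_mset Qs) \<union> C) \<inter> T \<noteq> {}" using Tne T_def by auto
  then have s2: "Hc (pT T) (\<Union>(set_mset Qs)) C = 1" unfolding Hc_def using HC Tne by (simp add: H_pT)
  show False using v s1 s2 A unfolding valid_def C_def Qs_def by simp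
qed

lemma imp_deg: assumes "size (snd (pur K)) \<le> 1" shows "degenerate n K"
  unfolding degenerate_def valid_def
proof (intro allI impI)
  fix p :: "outcome pmf"
  define C where "C = fst K"
  define Qs where "Qs = snd K"
  define A where "A = filter_mset (\<lambda>Q. Q \<subseteq> C) Qs"
  define B where "B = filter_mset (\<lambda>Q. \<not> Q \<subseteq> C) Qs"
  have QsAB: "Qs = A + B" unfolding A_def B_def by simp
  have sB: "size B \<le> 1" using assms by (simp add: size_pur B_def C_def Qs_def)
  have "image_mset (\<lambda>Q. Hc p Q C) A = image_mset (\<lambda>Q. 0) A"
    by (rule image_mset_cong) (auto simp: A_def Hc_def Un_absorb1)
  then have sA: "sum_mset (image_mset (\<lambda>Q. Hc p Q C) A) = 0" by simp
  have uA: "\<Union>(set_mset A) \<subseteq> C" by (auto simp: A_def)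
  show "sum_mset (image_mset (\<lambda>Q. Hc p Q (fst K)) (snd K)) - Hc p (\<Union>(set_mset (snd K))) (fst K) = 0"
  proof (cases "B = {#}")
    case True
    then show ?thesis using sA uA QsAB unfolding C_def[symmetric] Qs_def[symmetric]
      by (simp add: Hc_def Un_absorb1)
  next
    case False
    then obtain Q0 where "B = {#Q0#}" using sB size_1_singleton_mset
      by (metis le_antisym less_one not_le size_eq_0_iff_empty)
    moreover have "C \<union> Q0 \<union> \<Union>(set_mset A) = C \<union> Q0" using uA by blast
    ultimately show ?thesis using sA uA QsAB unfolding C_def[symmetric] Qs_def[symmetric]
      by (simp add: Hc_def sup_commute[of _ C] Un_assoc)
  qed
qed

lemma deg_iff: "degenerate n K \<longleftrightarrow> size (snd (pur K)) \<le> 1"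
  using deg_imp imp_deg by blast

lemma filt_all: "(\<And>x. x \<in># M \<Longrightarrow> P x) \<Longrightarrow> filter_mset P M = M"
  by (subst filter_mset_cong[of M M P "\<lambda>_. True"]) auto

definition pure :: "nat set \<Rightarrow> nat set multiset \<Rightarrow> bool" where
  "pure C Ms \<longleftrightarrow> (\<forall>M\<in>#Ms. M \<noteq> {} \<and> M \<inter> C = {})"

lemma pur_pure: assumes "pure C Ms" shows "pur (C, Ms) = (C, Ms)"
proof -
  have "image_mset (\<lambda>Q. Q - C) Ms = image_mset id Ms"
    by (rule image_mset_cong) (use assms in \<open>auto simp: pure_def\<close>)
  moreover have "filter_mset (\<lambda>Q. Q \<noteq> {}) Ms = Ms"
    using assms by (auto simp: pure_def intro!: filt_all )
  ultimately show ?thesis by (simp add: pur_def)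
qed

lemma psets_empty: assumes "pure C Ms" shows "Psets_of {} Ms = Ms"
  using assms unfolding Psets_of_def pure_def
  by (auto intro!: filt_all)

lemma pure_pur: "pure (fst K) (snd (pur K))"
  by (auto simp: pure_def pur_def)

lemma rep_sub: "rep Ms \<subseteq> \<Union>(set_mset Ms)"
proof
  fix m assume "m \<in> rep Ms"
  then have "2 \<le> size (filter_mset (\<lambda>Q. m \<in> Q) Ms)" by (simp add: rep_def split: if_splits)
  then obtain Q where "Q \<in># filter_mset (\<lambda>Q. m \<in> Q) Ms"
    by (metis multiset_nonemptyE size_empty not_numeral_le_zero)
  then show "m \<in> \<Union>(set_mset Ms)" by auto
qed

lemma rep_small: "size Ms \<le> 1 \<Longrightarrow> rep Ms = {}"
  by (simp add: rep_def)

lemma pure_psets: "pure C Ms \<Longrightarrow> pure C (Psets_of I Ms)"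
  by (auto simp: pure_def Psets_of_def)

lemma pure_rep: "pure C Ms \<Longrightarrow> rep Ms \<inter> C = {}"
  using rep_sub[of Ms] by (auto simp: pure_def)

lemma deg_pure: "pure C Ms \<Longrightarrow> degenerate n (C, Ms) \<longleftrightarrow> size Ms \<le> 1"
  by (simp add: deg_iff pur_pure)

lemma can_pure:
  assumes "pure C Ms" "size Ms \<ge> 2"
  shows "fst (can (C, Ms)) = C \<and> pure C (snd (can (C, Ms))) \<and> size (snd (can (C, Ms))) \<ge> 2"
proof -
  have rC: "rep Ms \<inter> C = {}" using pure_rep[OF assms(1)] .
  show ?thesis
  proof (cases "rep Ms = {}")
    case True
    then show ?thesis using assms psets_empty[OF assms(1)] by (simp add: can_def Let_def)
  next
    case False
    have "pure C {#rep Ms, rep Ms#}" using False rC by (auto simp: pure_def)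
    moreover have "pure C (Psets_of (rep Ms) Ms)" using pure_psets[OF assms(1)] .
    ultimately show ?thesis using assms False
      by (auto simp: can_def Let_def pure_def)
  qed
qed

lemma two_elems: "size Ms \<ge> 2 \<Longrightarrow> \<exists>A B. A \<in># Ms \<and> B \<in># Ms - {#A#}"
proof -
  assume a: "size Ms \<ge> 2"
  then have "Ms \<noteq> {#}" by auto
  then obtain A where A: "A \<in># Ms" by blast
  then have "size (Ms - {#A#}) \<ge> 1" using a by (simp add: size_Diff_singleton)
  then have "Ms - {#A#} \<noteq> {#}" by auto
  then obtain B where "B \<in># Ms - {#A#}" by blast
  with A show ?thesis by blast
qed

lemma two_elems_size: "X \<in># M \<Longrightarrow> Y \<in># M - {#X#} \<Longrightarrow> size M \<ge> 2"
proof -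
  assume a: "X \<in># M" and b: "Y \<in># M - {#X#}"
  have "M - {#X#} \<noteq> {#}" using b by auto
  then have "size (M - {#X#}) \<noteq> 0" by simp
  moreover have "size (M - {#X#}) = size M - 1" using a by (rule size_Diff_singleton)
  ultimately show "size M \<ge> 2" using a
    by (metis One_nat_def Suc_1 Suc_leI diff_is_0_eq' less_one not_less_eq_eq)
qed

lemma RK_shape:
  assumes "IK K = {}" "\<not> degenerate n K'"
  shows "fst (RK K K') = fst K' \<and> pure (fst K') (snd (RK K K')) \<and> size (snd (RK K K')) \<ge> 2"
proof -
  define C' where "C' = fst K'"
  define QP where "QP = snd (pur K')"
  have pQP: "pure C' QP" using pure_pur[of K'] by (simp add: C'_def QP_def pur_def)
  have sQP: "size QP \<ge> 2" using assms(2) deg_iff[of n K'] by (simp add: QP_def)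
  define D where "D = rep QP"
  have DC: "D \<inter> C' = {}" using pure_rep[OF pQP] D_def by simp
  define Ts where "Ts = Psets_of D QP"
  have pTs: "pure C' Ts" using pure_psets[OF pQP] Ts_def by simp
  have Ts_eq: "filter_mset (\<lambda>T. T \<noteq> {}) (image_mset (\<lambda>P. P - {}) (Psets K')) = Ts"
    unfolding Psets_def IK_def Ts_def D_def QP_def
    by (auto simp: Psets_of_def intro!: filt_all)
  have RK_eq: "RK K K' = (let D = D; Ts = Ts in
     if D = {} \<and> size Ts \<le> 1 then (C', {#})
     else if D = {} then (C', Ts)
     else if size Ts \<le> 1 then (C', {#D, D#})
     else (C', {#D, D#} + Ts))"
    apply (unfold RK_def Let_def assms(1))
    apply (unfold Ts_eq)
    by (simp add: C'_def D_def IK_def QP_def)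
  have nc: "\<not> (D = {} \<and> size Ts \<le> 1)"
    using psets_empty[OF pQP] sQP Ts_def by auto
  show ?thesis
    using nc pTs DC unfolding RK_eq C'_def[symmetric]
    by (auto simp: Let_def pure_def)
qed

theorem mainTheorem18:
  fixes n :: nat and K :: cmi
  assumes "is_cmi n K" and "degenerate n K"
  shows "\<forall>K'. is_cmi n K' \<longrightarrow> (sub_cmi n K' K \<longleftrightarrow> degenerate n K')"
proof (intro allI impI iffI)
  fix K' assume "degenerate n K'"
  then show "sub_cmi n K' K" by (simp add: sub_cmi_def)
next
  fix K' assume sub: "sub_cmi n K' K"
  show "degenerate n K'"
  proof (rule ccontr)
    assume nd: "\<not> degenerate n K'"
    have sK: "size (snd (pur K)) \<le> 1" using deg_imp[OF assms(2)] .
    have IKe: "IK K = {}" unfolding IK_def using rep_small[OF sK] .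
    have sPK: "size (Psets K) \<le> 1"
      using sK unfolding Psets_def Psets_of_def
      by (metis dual_order.trans size_filter_mset_lesseq size_image_mset)
    obtain Ms where K''eq: "RK K K' = (fst K', Ms)" and pMs: "pure (fst K') Ms" and sMs: "size Ms \<ge> 2"
      using RK_shape[OF IKe nd] by (metis prod.collapse)
    have cp: "fst (can (fst K', Ms)) = fst K' \<and> pure (fst K') (snd (can (fst K', Ms)))
              \<and> size (snd (can (fst K', Ms))) \<ge> 2" using can_pure[OF pMs sMs] .
    obtain C2 M2 where cM: "can (fst K', Ms) = (C2, M2)" by (cases "can (fst K', Ms)")
    have "C2 = fst K'" "pure (fst K') M2" "size M2 \<ge> 2" using cp unfolding cM by simp_all
    then have "\<not> degenerate n (C2, M2)" using deg_pure[of "fst K'" M2 n] by simp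
    then have ndc: "\<not> degenerate n (can (pur (RK K K')))"
      unfolding K''eq pur_pure[OF pMs] cM .
    have PK'': "Psets (RK K K') = Ms" if "IK (RK K K') = {}"
      using that unfolding Psets_def K''eq pur_pure[OF pMs] using psets_empty[OF pMs]
      by (simp add: IK_def pur_pure[OF pMs])
    from sub nd ndc have c3: "IK (RK K K') = {} \<and>
        (\<forall>A\<in>#Psets (RK K K'). \<forall>B\<in>#(Psets (RK K K') - {#A#}). \<forall>m1\<in>A. \<forall>m2\<in>B.
           (\<exists>X\<in>#Psets K. \<exists>Y\<in>#(Psets K - {#X#}). m1 \<in> X \<and> m2 \<in> Y))"
    proof -
      have "degenerate n K' \<or> (degenerate n (can (pur (RK K K'))) \<and> fst K \<subseteq> fst K') \<or>
         (\<not> degenerate n (can (pur (RK K K'))) \<and> IK (RK K K') = {} \<and> Pun (RK K K') \<subseteq> Pun K \<and>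
        fst K \<subseteq> fst (can (pur (RK K K'))) \<and> fst (can (pur (RK K K'))) \<subseteq> Sset K - Pun (RK K K') \<and>
        (\<forall>A\<in>#Psets (RK K K'). \<forall>B\<in>#(Psets (RK K K') - {#A#}). \<forall>m1\<in>A. \<forall>m2\<in>B.
           (\<exists>X\<in>#Psets K. \<exists>Y\<in>#(Psets K - {#X#}). m1 \<in> X \<and> m2 \<in> Y)))"
        using sub unfolding sub_cmi_def Let_def .
      then show ?thesis using nd ndc by (elim disjE conjE) simp_all
    qed
    then have PM: "Psets (RK K K') = Ms" using PK'' by blast
    obtain A B where AB: "A \<in># Ms" "B \<in># Ms - {#A#}" using two_elems[OF sMs] by blast
    have "A \<noteq> {}" "B \<noteq> {}" using AB pMs unfolding pure_def by (auto dest: in_diffD)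
    then obtain m1 m2 where "m1 \<in> A" "m2 \<in> B" by blast
    have "\<exists>X\<in>#Psets K. \<exists>Y\<in>#(Psets K - {#X#}). m1 \<in> X \<and> m2 \<in> Y"
      using c3 AB PM \<open>m1 \<in> A\<close> \<open>m2 \<in> B\<close> by blast
    then obtain X Y where "X \<in># Psets K" "Y \<in># Psets K - {#X#}" by blast
    then have "size (Psets K) \<ge> 2" by (rule two_elems_size)
    then show False using sPK by simp
  qed
qed

end
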